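(* Let $k\ge 1$ be such that $p=2k+1$ is a prime with $p\ne 3$. Then in $\mathbb{F}_p[q]$: (1) $\gcd(q^{p-1}-1,\,P_{k-1}(q))$ divides $q^4-1$; (2) $\gcd(q^{p+1}-1,\,P_{k-1}(q))$ divides $(q^4-1)(q^3-1)$.
   Context: $P_{k-1}(q)=1+\sum_{l=1}^{k} q^{4l-4}(q^4-q^3-q^2-q)$, reduced modulo $p$. Also $Q_{k-1}(q)=(q^4-1)P_{k-1}(q)=q^{4k+4}-q^{4k+3}-q^{4k+2}-q^{4k+1}+q^3+q^2+q-1$. *)

theory Defs
  imports "Berlekamp_Zassenhaus.Finite_Field" "HOL-Computational_Algebra.Polynomial"
begin

text \<open>P_{k-1}(q) = 1 + sum_{l=1}^{k} q^(4l-4) (q^4 - q^3 - q^2 - q), over any comm ring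
 (in particular over the prime field F_p = 'p mod_ring).\<close>
definition P_poly :: "nat \<Rightarrow> 'a::comm_ring_1 poly" where
  "P_poly k = 1 + (\<Sum>l=1..k. monom 1 (4*l - 4) *
      (monom 1 4 - monom 1 3 - monom 1 2 - monom 1 1))"

end

theory Submission
  imports Defs
begin

lemma monom_x: "monom (1::'a::comm_ring_1) n = monom 1 1 ^ n"
  by (simp add: monom_power)

lemma Q_id:
  fixes x :: "'a::comm_ring_1 poly"
  assumes "x = monom 1 1"
  shows "(x^4 - 1) * P_poly k = x^(4*k)*x^4 - x^(4*k)*x^3 - x^(4*k)*x^2 - x^(4*k)*x + x^3 + x^2 + x - 1"
proof (induction k)
  case 0
  then show ?case by (simp add: P_poly_def algebra_simps)
next
  case (Suc k)
  have P: "P_poly (Suc k) = P_poly k + x^(4*k) * (x^4 - x^3 - x^2 - x)"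
    unfolding P_poly_def using assms by (simp add: monom_x[of "4*k"] monom_x[of 4] monom_x[of 3] monom_x[of 2])
  have n: "4*Suc k = 4*k+4" by simp
  have e: "x^(4*Suc k) = x^(4*k)*x^4" unfolding n by (rule power_add)
  show ?case unfolding P e using Suc.IH by (simp add: algebra_simps)
qed

lemma L1:
  fixes x y X :: "'a::comm_ring_1"
  assumes "y = X*X"
  shows "x^4 - 1 = (y*x^4 - y*x^3 - y*x^2 - y*x + x^3 + x^2 + x - 1) - (X - 1) * ((X + 1) * (x^4 - x^3 - x^2 - x))"
  unfolding assms by (simp add: algebra_simps power2_eq_square power3_eq_cube power4_eq_xxxx)

lemma L2a:
  fixes x y X :: "'a::comm_ring_1"
  shows "(x^3 - 1) * (x^3 + x^2 + x + 1) = x^3 * (y*x^4 - y*x^3 - y*x^2 - y*x + x^3 + x^2 + x - 1) - (X - 1) * ((X + 1) * (x^3 - x^2 - x - 1)) + (X*X - y*x^4)*(x^3-x^2-x-1)"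
  by (simp add: algebra_simps power2_eq_square power3_eq_cube power4_eq_xxxx)

lemma L2:
  fixes x y X :: "'a::comm_ring_1"
  assumes "X*X = y*x^4"
  shows "(x^3 - 1) * (x^3 + x^2 + x + 1) = x^3 * (y*x^4 - y*x^3 - y*x^2 - y*x + x^3 + x^2 + x - 1) - (X - 1) * ((X + 1) * (x^3 - x^2 - x - 1))"
  using L2a[of x y X] assms by simp

theorem mainTheorem14:
  fixes k :: nat
  assumes "k \<ge> 1"
    and "CARD('p::prime_card) = 2*k + 1"
    and "CARD('p) \<noteq> 3"
  shows "gcd (monom (1::'p mod_ring) (CARD('p) - 1) - 1) (P_poly k) dvd (monom 1 4 - 1)
       \<and> gcd (monom (1::'p mod_ring) (CARD('p) + 1) - 1) (P_poly k)
           dvd (monom 1 4 - 1) * (monom 1 3 - 1)"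
proof -
  define x :: "'p mod_ring poly" where "x = monom 1 1"
  have Q: "(x^4 - 1) * P_poly k = x^(4*k)*x^4 - x^(4*k)*x^3 - x^(4*k)*x^2 - x^(4*k)*x + x^3 + x^2 + x - 1"
    by (rule Q_id) (simp add: x_def)
  have m: "\<And>n. monom (1::'p mod_ring) n = x^n" unfolding x_def by (rule monom_x)
  have c1: "CARD('p) - 1 = 2*k" "CARD('p) + 1 = 2*k+2" using assms(2) by auto
  have n1: "4*k = 2*k+2*k" by simp
  have y: "x^(4*k) = x^(2*k) * x^(2*k)" unfolding n1 by (rule power_add)
  have n2: "(2*k+2)+(2*k+2) = 4*k+4" by simp
  have y2: "x^(2*k+2) * x^(2*k+2) = x^(4*k)*x^4" by (metis power_add n2)
  have part1: "gcd (x^(2*k) - 1) (P_poly k) dvd (x^4 - 1)"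
  proof -
    let ?g = "gcd (x^(2*k) - 1) (P_poly k)"
    have a: "?g dvd (x^(2*k) - 1) * ((x^(2*k) + 1) * (x^4 - x^3 - x^2 - x))" by simp
    have b: "?g dvd (x^4 - 1) * P_poly k" by simp
    have "x^4 - 1 = (x^4 - 1) * P_poly k - (x^(2*k) - 1) * ((x^(2*k) + 1) * (x^4 - x^3 - x^2 - x))"
      unfolding Q by (rule L1[OF y])
    then show ?thesis using a b by (metis dvd_diff)
  qed
  have part2: "gcd (x^(2*k+2) - 1) (P_poly k) dvd (x^4 - 1) * (x^3 - 1)"
  proof -
    let ?X = "x^(2*k+2)"
    let ?g = "gcd (?X - 1) (P_poly k)"
    have a: "?g dvd (?X - 1) * ((?X + 1) * (x^3 - x^2 - x - 1))" by simp
    have b: "?g dvd x^3 * ((x^4 - 1) * P_poly k)" by simp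
    have e: "(x^3 - 1) * (x^3 + x^2 + x + 1) = x^3 * ((x^4 - 1) * P_poly k) - (?X - 1) * ((?X + 1) * (x^3 - x^2 - x - 1))"
      unfolding Q by (rule L2[OF y2])
    have "?g dvd (x^3 - 1) * (x^3 + x^2 + x + 1)" unfolding e using a b by (metis dvd_diff)
    then have "?g dvd (x^3 - 1) * (x^3 + x^2 + x + 1) * (x - 1)" by simp
    moreover have "(x^3 - 1) * (x^3 + x^2 + x + 1) * (x - 1) = (x^4 - 1) * (x^3 - 1)"
      by (simp add: algebra_simps power2_eq_square power3_eq_cube power4_eq_xxxx)
    ultimately show ?thesis by simp
  qed
  show ?thesis unfolding m c1 using part1 part2 by simp
qed

end
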